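(* Let $n\ge 3$, $u>0$, and let $S=[A_0,\dots,A_n]$ be an $n$-simplex with $\|A_i-A_0\|^2=v_i$ for $1\le i\le n$ and $\|A_i-A_j\|^2=u$ for $1\le i<j\le n$. For $0\le j\le n$ let $S_j$ be the facet of $S$ obtained by removing the vertex $A_j$, and let $\mathcal{C}_j,\mathcal{D}_j$ be the Cayley–Menger and inner Cayley–Menger determinants of $S_j$. Put $\alpha=u+v_1+\cdots+v_n$ and $\beta=u^2+v_1^2+\cdots+v_n^2$. Then for $1\le j\le n$: $$\mathcal{C}_0=(-1)^n n u^{n-1},\qquad \mathcal{C}_j=(-u)^{n-3}\big[-\alpha^2+(n-1)\beta-nv_j^2+2\alpha v_j\big],$$ $$\mathcal{D}_0=(-1)^{n+1}u^n(n-1),$$ $$\mathcal{D}_j=(-u)^{n-2}\big[(n-2)\beta-\alpha^2+2\alpha u-(n-1)u^2-(n-1)v_j^2+2\alpha v_j-2uv_j\big].$$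
   Context: For an $m$-simplex $T=[B_0,\dots,B_m]$ with $b_{i,j}=\|B_i-B_j\|^2$, the Cayley–Menger determinant is the $(m+2)\times(m+2)$ determinant with rows/columns indexed by $-1,0,\dots,m$, entries $0$ on the diagonal, $1$ in the rest of row $-1$ and column $-1$, and $b_{i,j}$ otherwise; the inner Cayley–Menger determinant is $\det(b_{i,j})_{0\le i,j\le m}$. *)

theory Defs
  imports "HOL-Analysis.Affine" "Jordan_Normal_Form.Determinant"
begin

text \<open>Cayley-Menger determinant of an m-simplex with vertices B 0, ..., B m.
  Row/column index 0 of the matrix corresponds to the index -1 of the paper,
  index k+1 corresponds to vertex B k.\<close>
definition cayley_menger :: "nat \<Rightarrow> (nat \<Rightarrow> 'a::real_normed_vector) \<Rightarrow> real" where
  "cayley_menger m B = det (mat (m+2) (m+2)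
     (\<lambda>(i,j). if i = j then 0
              else if i = 0 \<or> j = 0 then 1
              else (norm (B (i-1) - B (j-1)))\<^sup>2))"

definition inner_cayley_menger :: "nat \<Rightarrow> (nat \<Rightarrow> 'a::real_normed_vector) \<Rightarrow> real" where
  "inner_cayley_menger m B = det (mat (m+1) (m+1) (\<lambda>(i,j). (norm (B i - B j))\<^sup>2))"

definition facet :: "nat \<Rightarrow> (nat \<Rightarrow> 'a) \<Rightarrow> (nat \<Rightarrow> 'a)" where
  "facet j A = (\<lambda>k. if k < j then A k else A (Suc k))"

end

theory Submission
  imports Defs
begin


lemma sylvester_det:
  fixes U :: "real mat" and W :: "real mat"
  assumes U: "U \<in> carrier_mat N k" and W: "W \<in> carrier_mat k N" and c: "c \<noteq> 0"
  shows "c^k * det (c \<cdot>\<^sub>m 1\<^sub>m N + U * W) = c^N * det (c \<cdot>\<^sub>m 1\<^sub>m k + W * U)"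
proof -
  have UW: "U * W \<in> carrier_mat N N" using U W by auto
  have WU: "W * U \<in> carrier_mat k k" using U W by auto
  define B1 where "B1 = four_block_mat (c \<cdot>\<^sub>m 1\<^sub>m N) U (- W) (1\<^sub>m k)"
  define B2 where "B2 = four_block_mat (1\<^sub>m N) (0\<^sub>m N k) W (1\<^sub>m k)"
  define L where "L = four_block_mat (1\<^sub>m N) (0\<^sub>m N k) (- ((1/c) \<cdot>\<^sub>m W)) (1\<^sub>m k)"
  define R where "R = four_block_mat (c \<cdot>\<^sub>m 1\<^sub>m N) U (0\<^sub>m k N) (1\<^sub>m k + (1/c) \<cdot>\<^sub>m (W * U))"
  have "B1 * B2 = four_block_mat (c \<cdot>\<^sub>m 1\<^sub>m N * 1\<^sub>m N + U * W) (c \<cdot>\<^sub>m 1\<^sub>m N * 0\<^sub>m N k + U * 1\<^sub>m k)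
     (- W * 1\<^sub>m N + 1\<^sub>m k * W) (- W * 0\<^sub>m N k + 1\<^sub>m k * 1\<^sub>m k)"
    unfolding B1_def B2_def by (rule mult_four_block_mat, insert U W, auto)
  also have "\<dots> = four_block_mat (c \<cdot>\<^sub>m 1\<^sub>m N + U * W) U (0\<^sub>m k N) (1\<^sub>m k)"
    using U W by auto
  finally have e1: "B1 * B2 = four_block_mat (c \<cdot>\<^sub>m 1\<^sub>m N + U * W) U (0\<^sub>m k N) (1\<^sub>m k)" .
  have "L * R = four_block_mat (1\<^sub>m N * (c \<cdot>\<^sub>m 1\<^sub>m N) + 0\<^sub>m N k * 0\<^sub>m k N) (1\<^sub>m N * U + 0\<^sub>m N k * (1\<^sub>m k + (1/c) \<cdot>\<^sub>m (W * U)))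
     (- ((1/c) \<cdot>\<^sub>m W) * (c \<cdot>\<^sub>m 1\<^sub>m N) + 1\<^sub>m k * 0\<^sub>m k N) (- ((1/c) \<cdot>\<^sub>m W) * U + 1\<^sub>m k * (1\<^sub>m k + (1/c) \<cdot>\<^sub>m (W * U)))"
    unfolding L_def R_def by (rule mult_four_block_mat, insert U W, auto)
  also have "\<dots> = B1"
  proof -
    have a: "1\<^sub>m N * (c \<cdot>\<^sub>m 1\<^sub>m N) + 0\<^sub>m N k * 0\<^sub>m k N = c \<cdot>\<^sub>m 1\<^sub>m N" by auto
    have b: "1\<^sub>m N * U + 0\<^sub>m N k * (1\<^sub>m k + (1/c) \<cdot>\<^sub>m (W * U)) = U" using U W by auto
    have d: "- ((1/c) \<cdot>\<^sub>m W) * (c \<cdot>\<^sub>m 1\<^sub>m N) + 1\<^sub>m k * 0\<^sub>m k N = - W"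
      using W c by (auto intro!: eq_matI)
    have e: "- ((1/c) \<cdot>\<^sub>m W) * U + 1\<^sub>m k * (1\<^sub>m k + (1/c) \<cdot>\<^sub>m (W * U)) = 1\<^sub>m k"
      using U W c by (auto intro!: eq_matI)
    show ?thesis unfolding a b d e B1_def ..
  qed
  finally have e2: "L * R = B1" .
  have cB1: "B1 \<in> carrier_mat (N+k) (N+k)" unfolding B1_def using U W by auto
  have cB2: "B2 \<in> carrier_mat (N+k) (N+k)" unfolding B2_def using U W by auto
  have cL: "L \<in> carrier_mat (N+k) (N+k)" unfolding L_def using U W by auto
  have cR: "R \<in> carrier_mat (N+k) (N+k)" unfolding R_def using U W by auto
  have dB2: "det B2 = 1" unfolding B2_def
    by (subst det_four_block_mat_upper_right_zero[of _ N _ k], insert W, auto)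
  have dL: "det L = 1" unfolding L_def
    by (subst det_four_block_mat_upper_right_zero[of _ N _ k], insert W, auto)
  have dR: "det R = c^N * det (1\<^sub>m k + (1/c) \<cdot>\<^sub>m (W * U))" unfolding R_def
    by (subst det_four_block_mat_lower_left_zero[of _ N _ k], insert U W, auto)
  have dA: "det (four_block_mat (c \<cdot>\<^sub>m 1\<^sub>m N + U * W) U (0\<^sub>m k N) (1\<^sub>m k)) = det (c \<cdot>\<^sub>m 1\<^sub>m N + U * W)"
    by (subst det_four_block_mat_lower_left_zero[of _ N _ k], insert U W, auto)
  have "det (c \<cdot>\<^sub>m 1\<^sub>m N + U * W) = det (B1 * B2)" by (simp only: e1 dA)
  also have "\<dots> = det B1" by (simp only: det_mult[OF cB1 cB2] dB2 mult_1_right)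
  also have "\<dots> = det (L * R)" by (simp only: e2)
  also have "\<dots> = det L * det R" by (rule det_mult[OF cL cR])
  also have "\<dots> = c^N * det (1\<^sub>m k + (1/c) \<cdot>\<^sub>m (W * U))" by (simp only: dL dR mult_1_left)
  finally have X: "det (c \<cdot>\<^sub>m 1\<^sub>m N + U * W) = c^N * det (1\<^sub>m k + (1/c) \<cdot>\<^sub>m (W * U))" .
  have Y: "c \<cdot>\<^sub>m (1\<^sub>m k + (1/c) \<cdot>\<^sub>m (W * U)) = c \<cdot>\<^sub>m 1\<^sub>m k + W * U"
  proof -
    have cc: "\<And>x. c * (1 + x / c) = c + x" using c by (simp add: field_simps)
    show ?thesis using U W c by (auto intro!: eq_matI simp: cc)
  qed
  have Z: "det (c \<cdot>\<^sub>m (1\<^sub>m k + (1/c) \<cdot>\<^sub>m (W * U))) = c^k * det (1\<^sub>m k + (1/c) \<cdot>\<^sub>m (W * U))"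
    unfolding det_smult using U by simp
  have "det (c \<cdot>\<^sub>m 1\<^sub>m k + W * U) = c^k * det (1\<^sub>m k + (1/c) \<cdot>\<^sub>m (W * U))"
    using Z unfolding Y .
  thus ?thesis unfolding X by (simp only: mult.commute mult.left_commute)
qed



lemma mat_delete_mat: "mat_delete (mat (Suc n) (Suc n) f) i j =
   mat n n (\<lambda>(a,b). f (if a < i then a else Suc a, if b < j then b else Suc b))"
  unfolding mat_delete_def by (rule eq_matI, auto)

lemma det_mat_Suc: "det (mat (Suc n) (Suc n) f) =
  (\<Sum>j<Suc n. f (0,j) * ((-1)^j * det (mat n n (\<lambda>(a,b). f (Suc a, if b < j then b else Suc b)))))"
  by (subst laplace_expansion_row[of _ "Suc n" 0], auto simp: cofactor_def mat_delete_mat)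

lemma det1: "det (mat 1 1 f) = f (0,0)"
  using det_mat_Suc[of 0 f] by simp

lemma det2: "det (mat 2 2 f) = f(0,0)*f(1,1) - f(0,1)*f(1,0)"
  by (simp add: numeral_2_eq_2 det_mat_Suc det1)

lemma det3: "det (mat 3 3 f) = f(0,0)*(f(1,1)*f(2,2) - f(1,2)*f(2,1))
   - f(0,1)*(f(1,0)*f(2,2) - f(1,2)*f(2,0)) + f(0,2)*(f(1,0)*f(2,1)-f(1,1)*f(2,0))"
  apply (simp add: numeral_3_eq_3 det_mat_Suc det2)
  apply (simp add: numeral_2_eq_2 algebra_simps)
  done




lemma sum_split2: "(\<Sum>b\<in>{0..<m+2}. f b) = f 0 + f 1 + (\<Sum>i<m. f (Suc (Suc i)))"
proof -
  have "(\<Sum>b\<in>{0..<m+2}. f b) = (\<Sum>b<Suc (Suc m). f b)" by (simp add: atLeast0LessThan)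
  also have "\<dots> = f 0 + f 1 + (\<Sum>i<m. f (Suc (Suc i)))"
    by (simp only: sum.lessThan_Suc_shift add.assoc) simp
  finally show ?thesis .
qed

lemma sum_split2': "(\<Sum>b\<in>{0..<Suc (Suc m)}. f b) = f 0 + f 1 + (\<Sum>i<m. f (Suc (Suc i)))"
  using sum_split2[where m=m and f=f] by simp

lemma sum_split1: "(\<Sum>b\<in>{0..<m+1}. f b) = f 0 + (\<Sum>i<m. f (Suc i))"
proof -
  have "(\<Sum>b\<in>{0..<m+1}. f b) = (\<Sum>b<Suc m. f b)" by (simp add: atLeast0LessThan)
  also have "\<dots> = f 0 + (\<Sum>i<m. f (Suc i))"
    by (simp only: sum.lessThan_Suc_shift)
  finally show ?thesis .
qed

lemma s4: "\<And>f::nat\<Rightarrow>real. (\<Sum>i\<in>{0..<4}. f i) = f 0 + f 1 + f 2 + f 3"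
  by (simp add: numeral_eq_Suc atLeast0LessThan)

lemma less4: "(r::nat) < 4 \<longleftrightarrow> r = 0 \<or> r = 1 \<or> r = 2 \<or> r = 3" by auto

lemma cmj_det:
  fixes w :: "nat \<Rightarrow> real" assumes u: "u > 0"
  shows "(-u)^4 * det (mat (m+2) (m+2) (\<lambda>(a,b). if a=b then 0 else if a=0 \<or> b=0 then 1
     else if a=1 then w(b-1) else if b=1 then w(a-1) else u))
   = (-u)^(m+2) * (real m * (\<Sum>i<m. (w (Suc i))^2) - 2 * u * (\<Sum>i<m. w (Suc i))
       - (\<Sum>i<m. w (Suc i))^2 + u^2 * (real m - 1))"
proof -
  define Uf :: "nat \<times> nat \<Rightarrow> real" where "Uf = (\<lambda>(a,r). if r = 0 then (if a = 0 then 1 else 0)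
     else if r = 1 then (if a = 1 then 1 else 0) else if r = 2 then (if a \<ge> 2 then 1 else 0)
     else (if a \<ge> 2 then w (a-1) else 0))"
  define Wf :: "nat \<times> nat \<Rightarrow> real" where "Wf = (\<lambda>(r,b). if r = 0 then (if b = 0 then u else 1)
     else if r = 1 then (if b = 0 then 1 else if b = 1 then u else w (b-1))
     else if r = 2 then (if b = 0 then 1 else if b = 1 then 0 else u)
     else (if b = 1 then 1 else 0))"
  define U :: "real mat" where "U = mat (m+2) 4 Uf"
  define W :: "real mat" where "W = mat 4 (m+2) Wf"
  have cU: "U \<in> carrier_mat (m+2) 4" unfolding U_def by auto
  have cW: "W \<in> carrier_mat 4 (m+2)" unfolding W_def by auto
  have WU: "\<And>r s. r < 4 \<Longrightarrow> s < 4 \<Longrightarrow> (W * U) $$ (r,s) = Wf (r,0) * Uf (0,s) + Wf (r,1) * Uf (1,s)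
     + (\<Sum>i<m. Wf (r, Suc (Suc i)) * Uf (Suc (Suc i), s))"
    unfolding U_def W_def by (simp add: scalar_prod_def sum_split2 sum_split2' del: sum.op_ivl_Suc)
  have WU': "\<And>r s. r < 4 \<Longrightarrow> s < 4 \<Longrightarrow> ((-u) \<cdot>\<^sub>m 1\<^sub>m 4 + W * U) $$ (r,s) = (if r = s then -u else 0) +
     (Wf (r,0) * Uf (0,s) + Wf (r,1) * Uf (1,s)
     + (\<Sum>i<m. Wf (r, Suc (Suc i)) * Uf (Suc (Suc i), s)))"
  proof -
    fix r s :: nat assume rs: "r < 4" "s < 4"
    have 1: "((-u) \<cdot>\<^sub>m 1\<^sub>m 4 + W * U) $$ (r,s) = ((-u) \<cdot>\<^sub>m 1\<^sub>m 4) $$ (r,s) + (W * U) $$ (r,s)"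
      using cU cW rs by (intro index_add_mat(1)) auto
    have 2: "((-u) \<cdot>\<^sub>m 1\<^sub>m 4) $$ (r,s) = (if r = s then -u else 0)" using rs by simp
    show "?thesis r s" by (simp only: 1 2 WU[OF rs])
  qed
  define S1 where "S1 = (\<Sum>i<m. w (Suc i))"
  define S2 where "S2 = (\<Sum>i<m. (w (Suc i))^2)"
  have e1: "mat (m+2) (m+2) (\<lambda>(a,b). if a=b then 0 else if a=0 \<or> b=0 then 1
     else if a=1 then w(b-1) else if b=1 then w(a-1) else u) = (-u) \<cdot>\<^sub>m 1\<^sub>m (m+2) + U * W"
    by (rule eq_matI) (auto simp: U_def W_def Uf_def Wf_def scalar_prod_def s4)
  have e2: "(-u) \<cdot>\<^sub>m 1\<^sub>m 4 + W * U = mat 4 4 (\<lambda>(r,s).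
     if r = 0 then (if s = 0 then 0 else if s = 1 then 1 else if s = 2 then real m else S1)
     else if r = 1 then (if s = 0 then 1 else if s = 1 then 0 else if s = 2 then S1 else S2)
     else if r = 2 then (if s = 0 then 1 else if s = 1 then 0 else if s = 2 then u * real m - u else u * S1)
     else (if s = 0 then 0 else if s = 1 then 1 else if s = 2 then 0 else -u))"
    apply (rule eq_matI)
    apply (simp only: dim_row_mat dim_col_mat)
    apply (simp only: WU')
    apply (auto simp: cU[THEN carrier_matD(2)] cW[THEN carrier_matD(1)] less4 Uf_def Wf_def S1_def S2_def power2_eq_square sum_distrib_left)
    done
  have "(-u)^4 * det ((-u) \<cdot>\<^sub>m 1\<^sub>m (m+2) + U * W) = (-u)^(m+2) * det ((-u) \<cdot>\<^sub>m 1\<^sub>m 4 + W * U)"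
    by (rule sylvester_det[OF cU cW]) (use u in auto)
  also have "det ((-u) \<cdot>\<^sub>m 1\<^sub>m 4 + W * U) = real m * S2 - 2 * u * S1 - S1^2 + u^2 * (real m - 1)"
    unfolding e2 
    apply (simp add: numeral_eq_Suc det_mat_Suc)
    apply (simp add: algebra_simps power2_eq_square)
    done
  finally show ?thesis unfolding e1 S1_def S2_def .
qed

lemma s3: "\<And>f::nat\<Rightarrow>real. (\<Sum>i\<in>{0..<3}. f i) = f 0 + f 1 + f 2"
  by (simp add: numeral_eq_Suc atLeast0LessThan)
lemma s2: "\<And>f::nat\<Rightarrow>real. (\<Sum>i\<in>{0..<2}. f i) = f 0 + f 1"
  by (simp add: numeral_eq_Suc atLeast0LessThan)
lemma less3: "(r::nat) < 3 \<longleftrightarrow> r = 0 \<or> r = 1 \<or> r = 2" by auto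
lemma less2: "(r::nat) < 2 \<longleftrightarrow> r = 0 \<or> r = 1" by auto

lemma sum_split1': "(\<Sum>b\<in>{0..<Suc m}. f b) = f 0 + (\<Sum>i<m. f (Suc i))"
  using sum_split1[where m=m and f=f] by simp

lemma dj_det:
  fixes w :: "nat \<Rightarrow> real" assumes u: "u > 0"
  shows "(-u)^3 * det (mat (m+1) (m+1) (\<lambda>(a,b). if a=b then 0 else if a=0 then w b
     else if b=0 then w a else u))
   = (-u)^(m+1) * (u * ((\<Sum>i<m. w (Suc i))^2 - (real m - 1) * (\<Sum>i<m. (w (Suc i))^2)))"
proof -
  define Uf :: "nat \<times> nat \<Rightarrow> real" where "Uf = (\<lambda>(a,r). if r = 0 then (if a = 0 then 1 else 0)
     else if r = 1 then (if a \<ge> 1 then 1 else 0) else (if a \<ge> 1 then w a else 0))"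
  define Wf :: "nat \<times> nat \<Rightarrow> real" where "Wf = (\<lambda>(r,b). if r = 0 then (if b = 0 then u else w b)
     else if r = 1 then (if b = 0 then 0 else u)
     else (if b = 0 then 1 else 0))"
  define U :: "real mat" where "U = mat (m+1) 3 Uf"
  define W :: "real mat" where "W = mat 3 (m+1) Wf"
  define S1 where "S1 = (\<Sum>i<m. w (Suc i))"
  define S2 where "S2 = (\<Sum>i<m. (w (Suc i))^2)"
  have cU: "U \<in> carrier_mat (m+1) 3" unfolding U_def by auto
  have cW: "W \<in> carrier_mat 3 (m+1)" unfolding W_def by auto
  have WU: "\<And>r s. r < 3 \<Longrightarrow> s < 3 \<Longrightarrow> (W * U) $$ (r,s) = Wf (r,0) * Uf (0,s)
     + (\<Sum>i<m. Wf (r, Suc i) * Uf (Suc i, s))"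
    unfolding U_def W_def by (simp add: scalar_prod_def sum_split1 sum_split1' del: sum.op_ivl_Suc)
  have WU': "\<And>r s. r < 3 \<Longrightarrow> s < 3 \<Longrightarrow> ((-u) \<cdot>\<^sub>m 1\<^sub>m 3 + W * U) $$ (r,s) = (if r = s then -u else 0) +
     (Wf (r,0) * Uf (0,s) + (\<Sum>i<m. Wf (r, Suc i) * Uf (Suc i, s)))"
  proof -
    fix r s :: nat assume rs: "r < 3" "s < 3"
    have 1: "((-u) \<cdot>\<^sub>m 1\<^sub>m 3 + W * U) $$ (r,s) = ((-u) \<cdot>\<^sub>m 1\<^sub>m 3) $$ (r,s) + (W * U) $$ (r,s)"
      using cU cW rs by (intro index_add_mat(1)) auto
    have 2: "((-u) \<cdot>\<^sub>m 1\<^sub>m 3) $$ (r,s) = (if r = s then -u else 0)" using rs by simp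
    show "?thesis r s" by (simp only: 1 2 WU[OF rs])
  qed
  have e1: "mat (m+1) (m+1) (\<lambda>(a,b). if a=b then 0 else if a=0 then w b
     else if b=0 then w a else u) = (-u) \<cdot>\<^sub>m 1\<^sub>m (m+1) + U * W"
    by (rule eq_matI) (auto simp: U_def W_def Uf_def Wf_def scalar_prod_def s3)
  have e2: "(-u) \<cdot>\<^sub>m 1\<^sub>m 3 + W * U = mat 3 3 (\<lambda>(r,s).
     if r = 0 then (if s = 0 then 0 else if s = 1 then S1 else S2)
     else if r = 1 then (if s = 0 then 0 else if s = 1 then u * real m - u else u * S1)
     else (if s = 0 then 1 else if s = 1 then 0 else -u))"
    apply (rule eq_matI)
    apply (simp only: dim_row_mat dim_col_mat)
    apply (simp only: WU')
    apply (auto simp: cU[THEN carrier_matD(2)] cW[THEN carrier_matD(1)] less3 Uf_def Wf_def S1_def S2_def power2_eq_square sum_distrib_left)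
    done
  have "(-u)^3 * det ((-u) \<cdot>\<^sub>m 1\<^sub>m (m+1) + U * W) = (-u)^(m+1) * det ((-u) \<cdot>\<^sub>m 1\<^sub>m 3 + W * U)"
    by (rule sylvester_det[OF cU cW]) (use u in auto)
  also have "det ((-u) \<cdot>\<^sub>m 1\<^sub>m 3 + W * U) = u * (S1^2 - (real m - 1) * S2)"
    unfolding e2 
    apply (simp add: numeral_eq_Suc det_mat_Suc)
    apply (simp add: algebra_simps power2_eq_square)
    done
  finally show ?thesis unfolding e1 S1_def S2_def .
qed

lemma c0_det:
  assumes u: "(u::real) > 0"
  shows "(-u)^2 * det (mat (m+1) (m+1) (\<lambda>(a,b). if a=b then 0 else if a=0 \<or> b=0 then 1 else u))
   = (-u)^(m+1) * (- real m)"
proof -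
  define Uf :: "nat \<times> nat \<Rightarrow> real" where "Uf = (\<lambda>(a,r). if r = 0 then (if a = 0 then 1 else 0)
     else (if a \<ge> 1 then 1 else 0))"
  define Wf :: "nat \<times> nat \<Rightarrow> real" where "Wf = (\<lambda>(r,b). if r = 0 then (if b = 0 then u else 1)
     else (if b = 0 then 1 else u))"
  define U :: "real mat" where "U = mat (m+1) 2 Uf"
  define W :: "real mat" where "W = mat 2 (m+1) Wf"
  have cU: "U \<in> carrier_mat (m+1) 2" unfolding U_def by auto
  have cW: "W \<in> carrier_mat 2 (m+1)" unfolding W_def by auto
  have WU: "\<And>r s. r < 2 \<Longrightarrow> s < 2 \<Longrightarrow> (W * U) $$ (r,s) = Wf (r,0) * Uf (0,s)
     + (\<Sum>i<m. Wf (r, Suc i) * Uf (Suc i, s))"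
    unfolding U_def W_def by (simp add: scalar_prod_def sum_split1 sum_split1' del: sum.op_ivl_Suc)
  have WU': "\<And>r s. r < 2 \<Longrightarrow> s < 2 \<Longrightarrow> ((-u) \<cdot>\<^sub>m 1\<^sub>m 2 + W * U) $$ (r,s) = (if r = s then -u else 0) +
     (Wf (r,0) * Uf (0,s) + (\<Sum>i<m. Wf (r, Suc i) * Uf (Suc i, s)))"
  proof -
    fix r s :: nat assume rs: "r < 2" "s < 2"
    have 1: "((-u) \<cdot>\<^sub>m 1\<^sub>m 2 + W * U) $$ (r,s) = ((-u) \<cdot>\<^sub>m 1\<^sub>m 2) $$ (r,s) + (W * U) $$ (r,s)"
      using cU cW rs by (intro index_add_mat(1)) auto
    have 2: "((-u) \<cdot>\<^sub>m 1\<^sub>m 2) $$ (r,s) = (if r = s then -u else 0)" using rs by simp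
    show "?thesis r s" by (simp only: 1 2 WU[OF rs])
  qed
  have e1: "mat (m+1) (m+1) (\<lambda>(a,b). if a=b then 0 else if a=0 \<or> b=0 then 1 else u)
      = (-u) \<cdot>\<^sub>m 1\<^sub>m (m+1) + U * W"
    by (rule eq_matI) (auto simp: U_def W_def Uf_def Wf_def scalar_prod_def s2)
  have e2: "(-u) \<cdot>\<^sub>m 1\<^sub>m 2 + W * U = mat 2 2 (\<lambda>(r,s).
     if r = 0 then (if s = 0 then 0 else real m)
     else (if s = 0 then 1 else u * real m - u))"
    apply (rule eq_matI)
    apply (simp only: dim_row_mat dim_col_mat)
    apply (simp only: WU')
    apply (auto simp: cU[THEN carrier_matD(2)] cW[THEN carrier_matD(1)] less2 Uf_def Wf_def)
    done
  have "(-u)^2 * det ((-u) \<cdot>\<^sub>m 1\<^sub>m (m+1) + U * W) = (-u)^(m+1) * det ((-u) \<cdot>\<^sub>m 1\<^sub>m 2 + W * U)"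
    by (rule sylvester_det[OF cU cW]) (use u in auto)
  also have "det ((-u) \<cdot>\<^sub>m 1\<^sub>m 2 + W * U) = - real m"
    unfolding e2 det2 by simp
  finally show ?thesis unfolding e1 .
qed

lemma d0_det:
  assumes u: "(u::real) > 0"
  shows "(-u) * det (mat m m (\<lambda>(a,b). if a=b then 0 else u)) = (-u)^m * (u * real m - u)"
proof -
  define U :: "real mat" where "U = mat m 1 (\<lambda>_. 1)"
  define W :: "real mat" where "W = mat 1 m (\<lambda>_. u)"
  have cU: "U \<in> carrier_mat m 1" unfolding U_def by auto
  have cW: "W \<in> carrier_mat 1 m" unfolding W_def by auto
  have e1: "mat m m (\<lambda>(a,b). if a=b then 0 else u) = (-u) \<cdot>\<^sub>m 1\<^sub>m m + U * W"
    by (rule eq_matI) (auto simp: U_def W_def scalar_prod_def)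
  have e2: "(-u) \<cdot>\<^sub>m 1\<^sub>m 1 + W * U = mat 1 1 (\<lambda>_. u * real m - u)"
    by (rule eq_matI) (auto simp: U_def W_def scalar_prod_def)
  have "(-u)^1 * det ((-u) \<cdot>\<^sub>m 1\<^sub>m m + U * W) = (-u)^m * det ((-u) \<cdot>\<^sub>m 1\<^sub>m 1 + W * U)"
    by (rule sylvester_det[OF cU cW]) (use u in auto)
  also have "det ((-u) \<cdot>\<^sub>m 1\<^sub>m 1 + W * U) = u * real m - u"
    unfolding e2 det1 by simp
  finally show ?thesis unfolding e1 by simp
qed




lemma reindex_sum:
  fixes f :: "nat \<Rightarrow> real" assumes j: "1 \<le> j"
  shows "(\<Sum>i<j+k-1. f (if Suc i < j then Suc i else Suc (Suc i))) + f j = (\<Sum>i=1..j+k. f i)"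
proof (induction k)
  case 0
  obtain j' where j': "j = Suc j'" using j by (cases j) auto
  have "(\<Sum>i<j'. f (Suc i)) = (\<Sum>i=1..j'. f i)"
    by (induction j') auto
  then show ?case using j' by (simp add: sum.atLeast_Suc_atMost_Suc_shift)
next
  case (Suc k)
  have e: "j + Suc k - 1 = Suc (j + k - 1)" using j by simp
  have "(\<Sum>i<j + Suc k - 1. f (if Suc i < j then Suc i else Suc (Suc i))) + f j
     = (\<Sum>i<j+k-1. f (if Suc i < j then Suc i else Suc (Suc i))) + f j + f (Suc (j+k))"
    unfolding e sum.lessThan_Suc using j by simp
  also have "\<dots> = (\<Sum>i=1..j+Suc k. f i)" using Suc.IH by simp
  finally show ?case .
qed

theorem theorem4p2:
  fixes n :: nat and u alpha beta :: real and v :: "nat \<Rightarrow> real"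
    and A :: "nat \<Rightarrow> 'a::euclidean_space"
  assumes "n \<ge> 3" and "u > 0"
    and "inj_on A {0..n}" and "\<not> affine_dependent (A ` {0..n})"
    and "\<forall>i\<in>{1..n}. (norm (A i - A 0))\<^sup>2 = v i"
    and "\<forall>i j. 1 \<le> i \<and> i < j \<and> j \<le> n \<longrightarrow> (norm (A i - A j))\<^sup>2 = u"
    and "alpha = u + (\<Sum>i=1..n. v i)"
    and "beta = u\<^sup>2 + (\<Sum>i=1..n. (v i)\<^sup>2)"
  shows "cayley_menger (n-1) (facet 0 A) = (-1)^n * real n * u^(n-1)
    \<and> (\<forall>j\<in>{1..n}. cayley_menger (n-1) (facet j A) =
          (-u)^(n-3) * (- alpha\<^sup>2 + real (n-1) * beta - real n * (v j)\<^sup>2 + 2 * alpha * v j))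
    \<and> inner_cayley_menger (n-1) (facet 0 A) = (-1)^(n+1) * u^n * real (n-1)
    \<and> (\<forall>j\<in>{1..n}. inner_cayley_menger (n-1) (facet j A) =
          (-u)^(n-2) * (real (n-2) * beta - alpha\<^sup>2 + 2 * alpha * u - real (n-1) * u\<^sup>2
             - real (n-1) * (v j)\<^sup>2 + 2 * alpha * v j - 2 * u * v j))"
proof -
  note nn = assms(1) and u = assms(2)
  have hU: "\<And>i i'. 1 \<le> i \<Longrightarrow> i \<le> n \<Longrightarrow> 1 \<le> i' \<Longrightarrow> i' \<le> n \<Longrightarrow> i \<noteq> i' \<Longrightarrow>
      (norm (A i - A i'))\<^sup>2 = u"
  proof -
    fix i i' :: nat assume h: "1 \<le> i" "i \<le> n" "1 \<le> i'" "i' \<le> n" "i \<noteq> i'"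
    show "(norm (A i - A i'))\<^sup>2 = u"
    proof (cases "i < i'")
      case True thus ?thesis using assms(6) h by auto
    next
      case False thus ?thesis using assms(6)[rule_format, of i' i] h by (simp add: norm_minus_commute)
    qed
  qed
  have hV: "\<And>i. 1 \<le> i \<Longrightarrow> i \<le> n \<Longrightarrow> (norm (A i - A 0))\<^sup>2 = v i \<and> (norm (A 0 - A i))\<^sup>2 = v i"
    using assms(5) by (auto simp: norm_minus_commute)
  have pw: "\<And>a b. (-u)^(a+b) = (-u)^a * (-u)^b" by (simp add: power_add)
  have unz: "\<And>a. (-u)^a \<noteq> 0" using u by simp
  obtain k where kk: "n = Suc (Suc (Suc k))" using nn by (metis add_Suc_right add_0_right le_Suc_ex numeral_3_eq_3 add.commute)
  have C0: "cayley_menger (n-1) (facet 0 A) = (-1)^n * real n * u^(n-1)"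
  proof -
    have M: "cayley_menger (n-1) (facet 0 A) = det (mat (n-1+1+1) (n-1+1+1)
        (\<lambda>(a,b). if a=b then 0 else if a=0 \<or> b=0 then 1 else u))"
      unfolding cayley_menger_def facet_def
      by (rule arg_cong[where f=det], rule eq_matI) (auto intro!: hU)
    have "(-u)^2 * cayley_menger (n-1) (facet 0 A) = (-u)^(n-1+1+1) * (- real (n-1+1))"
      unfolding M by (rule c0_det[OF u])
    also have "\<dots> = (-u)^2 * ((-u)^(n-1) * (- real n))" unfolding kk
      by (simp add: algebra_simps power2_eq_square)
    finally have "cayley_menger (n-1) (facet 0 A) = (-u)^(n-1) * (- real n)" by (rule mult_left_cancel[OF unz, THEN iffD1])
    also have "\<dots> = (-1)^n * real n * u^(n-1)"
    proof -
      obtain k where k: "n = Suc k" using nn by (cases n) auto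
      show ?thesis unfolding k by (simp add: power_minus[of u] algebra_simps)
    qed
    finally show ?thesis .
  qed
  have D0: "inner_cayley_menger (n-1) (facet 0 A) = (-1)^(n+1) * u^n * real (n-1)"
  proof -
    have M: "inner_cayley_menger (n-1) (facet 0 A) = det (mat (n-1+1) (n-1+1)
        (\<lambda>(a,b). if a=b then 0 else u))"
      unfolding inner_cayley_menger_def facet_def
      by (rule arg_cong[where f=det], rule eq_matI) (auto intro!: hU)
    have "(-u) * inner_cayley_menger (n-1) (facet 0 A) = (-u)^(n-1+1) * (u * real (n-1+1) - u)"
      unfolding M by (rule d0_det[OF u])
    also have "\<dots> = (-u) * ((-u)^(n-1) * (u * real (n-1)))" unfolding kk
      by (simp add: algebra_simps power2_eq_square)
    finally have "inner_cayley_menger (n-1) (facet 0 A) = (-u)^(n-1) * (u * real (n-1))" using u by simp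
    also have "\<dots> = (-1)^(n+1) * u^n * real (n-1)"
    proof -
      obtain k where k: "n = Suc k" using nn by (cases n) auto
      show ?thesis unfolding k by (simp add: power_minus[of u] algebra_simps)
    qed
    finally show ?thesis .
  qed
  have hV1: "\<And>i. 1 \<le> i \<Longrightarrow> i \<le> n \<Longrightarrow> (norm (A i - A 0))\<^sup>2 = v i" using hV by blast
  have hV2: "\<And>i. 1 \<le> i \<Longrightarrow> i \<le> n \<Longrightarrow> (norm (A 0 - A i))\<^sup>2 = v i" using hV by blast
  have CDj: "cayley_menger (n-1) (facet j A) =
          (-u)^(n-3) * (- alpha\<^sup>2 + real (n-1) * beta - real n * (v j)\<^sup>2 + 2 * alpha * v j)
    \<and> inner_cayley_menger (n-1) (facet j A) =
          (-u)^(n-2) * (real (n-2) * beta - alpha\<^sup>2 + 2 * alpha * u - real (n-1) * u\<^sup>2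
             - real (n-1) * (v j)\<^sup>2 + 2 * alpha * v j - 2 * u * v j)" if j: "j \<in> {1..n}" for j
  proof -
    define idx where "idx a = (if a < j then a else Suc a)" for a
    define w where "w a = v (idx a)" for a
    have fj: "facet j A = (\<lambda>a. A (idx a))" unfolding facet_def idx_def by auto
    have idx0: "idx 0 = 0" using j unfolding idx_def by auto
    have idxr: "\<And>a. 1 \<le> a \<Longrightarrow> a \<le> n-1 \<Longrightarrow> 1 \<le> idx a \<and> idx a \<le> n" using j unfolding idx_def by auto
    have idxinj: "\<And>a b. idx a = idx b \<Longrightarrow> a = b" unfolding idx_def by (auto split: if_splits)
    have MC: "cayley_menger (n-1) (facet j A) = det (mat (n-1+2) (n-1+2) (\<lambda>(a,b). if a=b then 0 else if a=0 \<or> b=0 then 1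
     else if a=1 then w(b-1) else if b=1 then w(a-1) else u))"
      unfolding cayley_menger_def fj
    proof (rule arg_cong[where f=det], rule eq_matI)
      fix a b assume a: "a < dim_row (mat (n-1+2) (n-1+2) (\<lambda>(a,b). if a=b then 0 else if a=0 \<or> b=0 then 1
     else if a=1 then w(b-1) else if b=1 then w(a-1) else u))" and b: "b < dim_col (mat (n-1+2) (n-1+2) (\<lambda>(a,b). if a=b then 0 else if a=0 \<or> b=0 then 1
     else if a=1 then w(b-1) else if b=1 then w(a-1) else u))"
      hence a': "a < n+1" and b': "b < n+1" using nn by auto
      show "mat (n - 1 + 2) (n - 1 + 2) (\<lambda>(i, j). if i = j then 0 else if i = 0 \<or> j = 0 then 1
         else (norm (A (idx (i - 1)) - A (idx (j - 1))))\<^sup>2) $$ (a, b) =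
        mat (n-1+2) (n-1+2) (\<lambda>(a,b). if a=b then 0 else if a=0 \<or> b=0 then 1
     else if a=1 then w(b-1) else if b=1 then w(a-1) else u) $$ (a, b)"
      proof -
        have "(norm (A (idx (a - 1)) - A (idx (b - 1))))\<^sup>2 = (if a=1 then w(b-1) else if b=1 then w(a-1) else u)"
          if "a \<noteq> b" "a \<noteq> 0" "b \<noteq> 0"
        proof -
          have "a = 1 \<or> b = 1 \<or> (a \<ge> 2 \<and> b \<ge> 2)" using that by linarith
          then consider "a = 1" | "b = 1" | "a \<ge> 2 \<and> b \<ge> 2" by blast
          thus ?thesis
          proof cases
            case 1 thus ?thesis using that b' idxr[of "b-1"] idx0 hV2[of "idx (b-1)"] by (simp add: w_def)
          next
            case 2 thus ?thesis using that a' idxr[of "a-1"] idx0 hV1[of "idx (a-1)"] by (simp add: w_def)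
          next
            case 3
            have "idx (a-1) \<noteq> idx (b-1)" using idxinj that 3 by fastforce
            moreover have "1 \<le> idx (a-1) \<and> idx (a-1) \<le> n" using idxr[of "a-1"] 3 a' by auto
            moreover have "1 \<le> idx (b-1) \<and> idx (b-1) \<le> n" using idxr[of "b-1"] 3 b' by auto
            ultimately show ?thesis using 3 that hU[of "idx (a-1)" "idx (b-1)"] by simp
          qed
        qed
        thus ?thesis using a' b' nn by auto
      qed
    qed auto
    have MD: "inner_cayley_menger (n-1) (facet j A) = det (mat (n-1+1) (n-1+1) (\<lambda>(a,b). if a=b then 0 else if a=0 then w b
     else if b=0 then w a else u))"
      unfolding inner_cayley_menger_def fj
    proof (rule arg_cong[where f=det], rule eq_matI)
      fix a b assume a: "a < dim_row (mat (n-1+1) (n-1+1) (\<lambda>(a,b). if a=b then 0 else if a=0 then w b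
     else if b=0 then w a else u))" and b: "b < dim_col (mat (n-1+1) (n-1+1) (\<lambda>(a,b). if a=b then 0 else if a=0 then w b
     else if b=0 then w a else u))"
      hence a': "a < n" and b': "b < n" using nn by auto
      have "(norm (A (idx a) - A (idx b)))\<^sup>2 = (if a=b then 0 else if a=0 then w b
         else if b=0 then w a else u)"
      proof -
        consider "a = b" | "a \<noteq> b \<and> a = 0" | "a \<noteq> b \<and> b = 0" | "a \<noteq> b \<and> a \<ge> 1 \<and> b \<ge> 1" by linarith
        thus ?thesis
        proof cases
          case 1 thus ?thesis by simp
        next
          case 2 thus ?thesis using b' idxr[of b] idx0 hV2[of "idx b"] by (simp add: w_def)
        next
          case 3 thus ?thesis using a' idxr[of a] idx0 hV1[of "idx a"] by (simp add: w_def)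
        next
          case 4
          have "idx a \<noteq> idx b" using idxinj 4 by fastforce
          moreover have "1 \<le> idx a \<and> idx a \<le> n" using idxr[of a] 4 a' by auto
          moreover have "1 \<le> idx b \<and> idx b \<le> n" using idxr[of b] 4 b' by auto
          ultimately show ?thesis using 4 hU[of "idx a" "idx b"] by simp
        qed
      qed
      thus "mat (n - 1 + 1) (n - 1 + 1) (\<lambda>(i, j). (norm (A (idx i) - A (idx j)))\<^sup>2) $$ (a, b) =
        mat (n-1+1) (n-1+1) (\<lambda>(a,b). if a=b then 0 else if a=0 then w b
     else if b=0 then w a else u) $$ (a, b)" using a' b' nn by auto
    qed auto
    have jn: "j + (n - j) = n" using j by auto
    have S1: "(\<Sum>i<n-1. w (Suc i)) = alpha - u - v j"
      using reindex_sum[of j v "n-j"] j unfolding jn assms(7) w_def idx_def by auto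
    have S2: "(\<Sum>i<n-1. (w (Suc i))^2) = beta - u^2 - (v j)^2"
      using reindex_sum[of j "\<lambda>i. (v i)^2" "n-j"] j unfolding jn assms(8) w_def idx_def by auto
    have c1: "(-u)^4 * cayley_menger (n-1) (facet j A) = (-u)^4 * ((-u)^(n-3) *
       (real (n-1) * (beta - u^2 - (v j)^2) - 2 * u * (alpha - u - v j) - (alpha - u - v j)^2 + u^2 * (real (n-1) - 1)))"
    proof -
      have e: "n-1+2 = 4 + (n-3)" using nn by simp
      have pow: "(-u)^(n-1+2) = (-u)^4 * (-u)^(n-3)" unfolding e power_add ..
      show ?thesis unfolding MC cmj_det[OF u, of "n-1" w] S1 S2 pow by (simp only: mult.assoc)
    qed
    have d1: "(-u)^3 * inner_cayley_menger (n-1) (facet j A) = (-u)^3 * ((-u)^(n-3) *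
       (u * ((alpha - u - v j)^2 - (real (n-1) - 1) * (beta - u^2 - (v j)^2))))"
    proof -
      have e: "n-1+1 = 3 + (n-3)" using nn by simp
      have pow: "(-u)^(n-1+1) = (-u)^3 * (-u)^(n-3)" unfolding e power_add ..
      show ?thesis unfolding MD dj_det[OF u, of "n-1" w] S1 S2 pow by (simp only: mult.assoc)
    qed
    have c2: "cayley_menger (n-1) (facet j A) = (-u)^(n-3) *
       (real (n-1) * (beta - u^2 - (v j)^2) - 2 * u * (alpha - u - v j) - (alpha - u - v j)^2 + u^2 * (real (n-1) - 1))"
      using c1 by (rule mult_left_cancel[OF unz, THEN iffD1])
    have d2: "inner_cayley_menger (n-1) (facet j A) = (-u)^(n-3) *
       (u * ((alpha - u - v j)^2 - (real (n-1) - 1) * (beta - u^2 - (v j)^2)))"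
      using d1 by (rule mult_left_cancel[OF unz, THEN iffD1])
    show ?thesis unfolding c2 d2 unfolding kk by (simp add: algebra_simps power2_eq_square)
  qed
  show ?thesis using C0 D0 CDj by blast
qed


end
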